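(* Let $L$ be a simple Lie algebra over a field $K$ of characteristic $\neq 2$ such that $\mathrm{HomLie}(L)$ is closed with respect to the anticommutator $\varphi * \psi = \frac12(\varphi\circ\psi+\psi\circ\varphi)$. Then either $\mathrm{HomLie}(L) = \mathrm{Cent}(L)$, or $L$ is isomorphic to a subalgebra of the Lie algebra $\mathrm{Der}(\mathrm{HomLie}(L))$ of derivations of the Jordan algebra $(\mathrm{HomLie}(L), * )$.
   Context: A Hom-Lie structure on a Lie algebra $L$ is a linear map $\varphi: L \to L$ satisfying $[[x,y],\varphi(z)] + [[z,x],\varphi(y)] + [[y,z],\varphi(x)] = 0$ for all $x,y,z \in L$; $\mathrm{HomLie}(L)$ is the space of all of them. The centroid $\mathrm{Cent}(L)$ is the space of linear maps $\varphi: L\to L$ with $\varphi([x,y]) = [\varphi(x),y]$ for all $x,y \in L$. *)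

theory Defs
  imports Main "HOL.Vector_Spaces"
begin

locale lie_algebra = vector_space sc
  for sc :: "'k::field \<Rightarrow> 'v::ab_group_add \<Rightarrow> 'v"
  + fixes br :: "'v \<Rightarrow> 'v \<Rightarrow> 'v"
  assumes br_add_left: "br (x + y) z = br x z + br y z"
    and br_add_right: "br x (y + z) = br x y + br x z"
    and br_scale_left: "br (sc a x) y = sc a (br x y)"
    and br_scale_right: "br x (sc a y) = sc a (br x y)"
    and br_alt: "br x x = 0"
    and jacobi: "br x (br y z) + br y (br z x) + br z (br x y) = 0"

definition lie_ideal :: "('k::field \<Rightarrow> 'v::ab_group_add \<Rightarrow> 'v) \<Rightarrow> ('v \<Rightarrow> 'v \<Rightarrow> 'v) \<Rightarrow> 'v set \<Rightarrow> bool" where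
  "lie_ideal sc br I \<longleftrightarrow> module.subspace sc I \<and> (\<forall>x y. y \<in> I \<longrightarrow> br x y \<in> I)"

definition simple_lie_algebra :: "('k::field \<Rightarrow> 'v::ab_group_add \<Rightarrow> 'v) \<Rightarrow> ('v \<Rightarrow> 'v \<Rightarrow> 'v) \<Rightarrow> bool" where
  "simple_lie_algebra sc br \<longleftrightarrow> lie_algebra sc br \<and> (\<exists>x y. br x y \<noteq> 0)
     \<and> (\<forall>I. lie_ideal sc br I \<longrightarrow> I = {0} \<or> I = UNIV)"

definition HomLie :: "('k::field \<Rightarrow> 'v::ab_group_add \<Rightarrow> 'v) \<Rightarrow> ('v \<Rightarrow> 'v \<Rightarrow> 'v) \<Rightarrow> ('v \<Rightarrow> 'v) set" where
  "HomLie sc br = {\<phi>. Vector_Spaces.linear sc sc \<phi> \<and>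
     (\<forall>x y z. br (br x y) (\<phi> z) + br (br z x) (\<phi> y) + br (br y z) (\<phi> x) = 0)}"

definition Cent :: "('k::field \<Rightarrow> 'v::ab_group_add \<Rightarrow> 'v) \<Rightarrow> ('v \<Rightarrow> 'v \<Rightarrow> 'v) \<Rightarrow> ('v \<Rightarrow> 'v) set" where
  "Cent sc br = {\<phi>. Vector_Spaces.linear sc sc \<phi> \<and> (\<forall>x y. \<phi> (br x y) = br (\<phi> x) y)}"

definition endo_scale :: "('k \<Rightarrow> 'v \<Rightarrow> 'v) \<Rightarrow> 'k \<Rightarrow> ('v \<Rightarrow> 'v) \<Rightarrow> ('v \<Rightarrow> 'v)" where
  "endo_scale sc a \<phi> = (\<lambda>x. sc a (\<phi> x))"

definition endo_add :: "('v::ab_group_add \<Rightarrow> 'v) \<Rightarrow> ('v \<Rightarrow> 'v) \<Rightarrow> ('v \<Rightarrow> 'v)" where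
  "endo_add \<phi> \<psi> = (\<lambda>x. \<phi> x + \<psi> x)"

definition endo_diff :: "('v::ab_group_add \<Rightarrow> 'v) \<Rightarrow> ('v \<Rightarrow> 'v) \<Rightarrow> ('v \<Rightarrow> 'v)" where
  "endo_diff \<phi> \<psi> = (\<lambda>x. \<phi> x - \<psi> x)"

definition jordan_prod :: "('k::field \<Rightarrow> 'v::ab_group_add \<Rightarrow> 'v) \<Rightarrow> ('v \<Rightarrow> 'v) \<Rightarrow> ('v \<Rightarrow> 'v) \<Rightarrow> ('v \<Rightarrow> 'v)" where
  "jordan_prod sc \<phi> \<psi> = (\<lambda>x. sc (inverse 2) (\<phi> (\<psi> x) + \<psi> (\<phi> x)))"

text \<open>Derivations of the Jordan algebra (H, *) where H is a set of endomorphisms closed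
  under the pointwise operations and *: maps D : H \<rightarrow> H which are K-linear on H and satisfy
  D(a * b) = D a * b + a * D b.  (Values of D outside H are irrelevant.)\<close>

definition jordan_der :: "('k::field \<Rightarrow> 'v::ab_group_add \<Rightarrow> 'v) \<Rightarrow> ('v \<Rightarrow> 'v) set
     \<Rightarrow> (('v \<Rightarrow> 'v) \<Rightarrow> ('v \<Rightarrow> 'v)) set" where
  "jordan_der sc H = {D. (\<forall>\<phi>\<in>H. D \<phi> \<in> H)
     \<and> (\<forall>\<phi>\<in>H. \<forall>\<psi>\<in>H. D (endo_add \<phi> \<psi>) = endo_add (D \<phi>) (D \<psi>))
     \<and> (\<forall>a. \<forall>\<phi>\<in>H. D (endo_scale sc a \<phi>) = endo_scale sc a (D \<phi>))
     \<and> (\<forall>\<phi>\<in>H. \<forall>\<psi>\<in>H. D (jordan_prod sc \<phi> \<psi>) = endo_add (jordan_prod sc (D \<phi>) \<psi>) (jordan_prod sc \<phi> (D \<psi>)))}"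

text \<open>L embeds as a Lie subalgebra of Der(H, *) (with commutator bracket and pointwise
  linear structure): there is an injective Lie algebra homomorphism f : L \<rightarrow> Der(H,*),
  where elements of Der(H,*) are identified when they agree on H.\<close>

definition embeds_in_jordan_der :: "('k::field \<Rightarrow> 'v::ab_group_add \<Rightarrow> 'v) \<Rightarrow> ('v \<Rightarrow> 'v \<Rightarrow> 'v)
     \<Rightarrow> ('v \<Rightarrow> 'v) set \<Rightarrow> bool" where
  "embeds_in_jordan_der sc br H \<longleftrightarrow> (\<exists>f :: 'v \<Rightarrow> (('v \<Rightarrow> 'v) \<Rightarrow> ('v \<Rightarrow> 'v)).
      (\<forall>x. f x \<in> jordan_der sc H)
    \<and> (\<forall>x y. \<forall>\<phi>\<in>H. f (x + y) \<phi> = endo_add (f x \<phi>) (f y \<phi>))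
    \<and> (\<forall>a x. \<forall>\<phi>\<in>H. f (sc a x) \<phi> = endo_scale sc a (f x \<phi>))
    \<and> (\<forall>x y. \<forall>\<phi>\<in>H. f (br x y) \<phi> = endo_diff (f x (f y \<phi>)) (f y (f x \<phi>)))
    \<and> (\<forall>x y. (\<forall>\<phi>\<in>H. f x \<phi> = f y \<phi>) \<longrightarrow> x = y))"

end

theory Submission
  imports Defs
begin

lemma lin_add: "Vector_Spaces.linear s s f \<Longrightarrow> f (a + b) = f a + f b"
  by (metis linear_iff_module_hom module_hom.add)
lemma lin_scale: "Vector_Spaces.linear s s f \<Longrightarrow> f (s c a) = s c (f a)"
  by (metis linear_iff_module_hom module_hom.scale)
lemma lin_diff: "Vector_Spaces.linear s s f \<Longrightarrow> f (a - b) = f a - f b"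
  by (metis linear_iff_module_hom module_hom.diff)
lemma lin_neg: "Vector_Spaces.linear s s f \<Longrightarrow> f (- a) = - f a"
  by (metis linear_iff_module_hom module_hom.neg)
lemma lin_zero: "Vector_Spaces.linear s s f \<Longrightarrow> f 0 = 0"
  by (metis linear_iff_module_hom module_hom.zero)

context lie_algebra
begin

lemma br_zero_left[simp]: "br 0 x = 0"
  using br_add_left[of 0 0 x] by simp
lemma br_zero_right[simp]: "br x 0 = 0"
  using br_add_right[of x 0 0] by simp
lemma br_neg_left: "br (- x) y = - br x y"
  using br_add_left[of x "- x" y] by (simp add: eq_neg_iff_add_eq_0 add.commute)
lemma br_neg_right: "br x (- y) = - br x y"
  using br_add_right[of x y "- y"] by (simp add: eq_neg_iff_add_eq_0 add.commute)
lemma br_diff_left: "br (x - y) z = br x z - br y z"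
  by (metis diff_conv_add_uminus br_add_left br_neg_left)
lemma br_diff_right: "br x (y - z) = br x y - br x z"
  by (metis diff_conv_add_uminus br_add_right br_neg_right)
lemma br_skew: "br x y = - br y x"
proof -
  have "br (x + y) (x + y) = 0" by (rule br_alt)
  then have "br x y + br y x = 0"
    using br_alt[of x] br_alt[of y] by (simp add: br_add_left br_add_right add.assoc add.commute)
  then show ?thesis by (simp add: eq_neg_iff_add_eq_0)
qed

lemma grp: "(a::'a::ab_group_add) + - p + - q = 0 \<Longrightarrow> a = q + p"
  by (metis add.commute add_diff_cancel_left' diff_add_cancel diff_conv_add_uminus diff_diff_eq eq_iff_diff_eq_0)

lemma leibniz: "br a (br u w) = br (br a u) w + br u (br a w)"
proof -
  have B: "br u (br w a) = - br u (br a w)"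
    using br_skew[of w a] br_neg_right by simp
  have C: "br w (br a u) = - br (br a u) w"
    using br_skew[of w "br a u"] by simp
  have "br a (br u w) + - br u (br a w) + - br (br a u) w = 0"
    using jacobi[of a u w] unfolding B C .
  then show ?thesis by (rule grp)
qed

definition ad_comm :: "'v \<Rightarrow> ('v \<Rightarrow> 'v) \<Rightarrow> ('v \<Rightarrow> 'v)" where
  "ad_comm x \<phi> = (\<lambda>w. br x (\<phi> w) - \<phi> (br x w))"

lemma ad_comm_linear:
  assumes "Vector_Spaces.linear sc sc \<phi>"
  shows "Vector_Spaces.linear sc sc (ad_comm x \<phi>)"
  unfolding linear_iff_module_hom
proof (rule module_hom.intro)
  show "module sc" by (rule module_axioms)
  show "module sc" by (rule module_axioms)
  show "module_hom_axioms sc sc (ad_comm x \<phi>)"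
    unfolding module_hom_axioms_def ad_comm_def
    using assms
    by (simp add: lin_add lin_scale br_add_right br_scale_right scale_right_diff_distrib)
qed

lemma br_br: "br (br x y) u = br x (br y u) - br y (br x u)"
  using leibniz[of x y u] by (simp add: algebra_simps)

lemma ad_comm_HomLie:
  assumes ph: "\<phi> \<in> HomLie sc br"
  shows "ad_comm a \<phi> \<in> HomLie sc br"
proof -
  have lin: "Vector_Spaces.linear sc sc \<phi>" using ph by (simp add: HomLie_def)
  define S where "S x y z = br (br x y) (\<phi> z) + br (br z x) (\<phi> y) + br (br y z) (\<phi> x)" for x y z
  have S0: "S x y z = 0" for x y z using ph by (simp add: HomLie_def S_def)
  have L: "br (br x y) (br a (\<phi> z)) = br a (br (br x y) (\<phi> z)) - br (br (br a x) y) (\<phi> z) - br (br x (br a y)) (\<phi> z)" for x y z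
  proof -
    have "br a (br (br x y) (\<phi> z)) = br (br a (br x y)) (\<phi> z) + br (br x y) (br a (\<phi> z))"
      by (rule leibniz)
    moreover have "br (br a (br x y)) (\<phi> z) = br (br (br a x) y) (\<phi> z) + br (br x (br a y)) (\<phi> z)"
      by (simp add: leibniz[of a x y] br_add_left)
    ultimately show ?thesis by (simp add: algebra_simps)
  qed
  have "br (br x y) (ad_comm a \<phi> z) + br (br z x) (ad_comm a \<phi> y) + br (br y z) (ad_comm a \<phi> x) = 0" for x y z
  proof -
    have "br (br x y) (ad_comm a \<phi> z) + br (br z x) (ad_comm a \<phi> y) + br (br y z) (ad_comm a \<phi> x)
      = br a (S x y z) - (S (br a x) y z + S x (br a y) z + S x y (br a z))"
      unfolding ad_comm_def S_def
      by (simp add: br_diff_right L br_add_right algebra_simps)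
    then show ?thesis by (simp add: S0)
  qed
  then show ?thesis using ad_comm_linear[OF lin] by (simp add: HomLie_def)
qed

lemma Cent_HomLie: "Cent sc br \<subseteq> HomLie sc br"
proof
  fix \<phi> assume "\<phi> \<in> Cent sc br"
  then have lin: "Vector_Spaces.linear sc sc \<phi>" and c: "\<And>x y. \<phi> (br x y) = br (\<phi> x) y"
    by (auto simp: Cent_def)
  have cm: "br u (\<phi> w) = \<phi> (br u w)" for u w
    using c[of w u] br_skew[of u "\<phi> w"] br_skew[of u w] lin_neg[OF lin] by simp
  have "br (br x y) (\<phi> z) + br (br z x) (\<phi> y) + br (br y z) (\<phi> x) = 0" for x y z
  proof -
    have "br (br x y) (\<phi> z) + br (br z x) (\<phi> y) + br (br y z) (\<phi> x)
        = \<phi> (br (br x y) z + br (br z x) y + br (br y z) x)"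
      by (simp add: cm lin_add[OF lin])
    also have "br (br x y) z + br (br z x) y + br (br y z) x
       = - (br z (br x y) + br x (br y z) + br y (br z x))"
      using br_skew[of "br x y" z] br_skew[of "br z x" y] br_skew[of "br y z" x]
      by (simp add: algebra_simps)
    also have "\<dots> = 0" using jacobi[of z x y] by simp
    finally show ?thesis using lin_zero[OF lin] by simp
  qed
  then show "\<phi> \<in> HomLie sc br" using lin by (simp add: HomLie_def)
qed

end

theorem corollary2p7:
  fixes sc :: "'k::field \<Rightarrow> 'v::ab_group_add \<Rightarrow> 'v"
    and br :: "'v \<Rightarrow> 'v \<Rightarrow> 'v"
  assumes "simple_lie_algebra sc br"
    and "(2::'k) \<noteq> 0"
    and "\<forall>\<phi>\<in>HomLie sc br. \<forall>\<psi>\<in>HomLie sc br. jordan_prod sc \<phi> \<psi> \<in> HomLie sc br"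
  shows "HomLie sc br = Cent sc br \<or> embeds_in_jordan_der sc br (HomLie sc br)"
proof -
  interpret lie_algebra sc br using assms(1) by (simp add: simple_lie_algebra_def)
  have simp_ideals: "\<And>I. lie_ideal sc br I \<Longrightarrow> I = {0} \<or> I = UNIV"
    using assms(1) by (simp add: simple_lie_algebra_def)
  let ?H = "HomLie sc br"
  have linH: "Vector_Spaces.linear sc sc \<phi>" if "\<phi> \<in> ?H" for \<phi> using that by (simp add: HomLie_def)
  define K where "K = {z. \<forall>\<phi>\<in>?H. \<forall>w. br z (\<phi> w) = \<phi> (br z w)}"
  have idealK: "lie_ideal sc br K"
    unfolding lie_ideal_def
  proof
    show "subspace K"
      unfolding subspace_def K_def
      by (auto simp: lin_zero[OF linH] lin_add[OF linH] lin_scale[OF linH] br_add_left br_scale_left)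
    show "\<forall>x y. y \<in> K \<longrightarrow> br x y \<in> K"
    proof (intro allI impI)
      fix x z assume "z \<in> K"
      then have hz: "\<And>\<phi> w. \<phi> \<in> ?H \<Longrightarrow> br z (\<phi> w) = \<phi> (br z w)" by (simp add: K_def)
      show "br x z \<in> K" unfolding K_def
      proof (intro CollectI ballI allI)
        fix \<phi> w assume ph: "\<phi> \<in> ?H"
        define \<psi> where "\<psi> = ad_comm x \<phi>"
        have psH: "\<psi> \<in> ?H" using ad_comm_HomLie[OF ph] by (simp add: \<psi>_def)
        have s1: "br (br x z) (\<phi> w) = br x (br z (\<phi> w)) - br z (br x (\<phi> w))" by (rule br_br)
        have s2: "br z (\<phi> w) = \<phi> (br z w)" using hz[OF ph] .
        have s3: "br z (br x (\<phi> w)) = br z (\<psi> w) + br z (\<phi> (br x w))"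
          by (simp add: \<psi>_def ad_comm_def br_add_right[symmetric])
        have s4: "br z (\<psi> w) = br x (\<phi> (br z w)) - \<phi> (br x (br z w))"
          using hz[OF psH] by (simp add: \<psi>_def ad_comm_def)
        have s5: "br z (\<phi> (br x w)) = \<phi> (br z (br x w))" using hz[OF ph] .
        have s6: "\<phi> (br (br x z) w) = \<phi> (br x (br z w)) - \<phi> (br z (br x w))"
          by (simp add: br_br lin_diff[OF linH[OF ph]])
        show "br (br x z) (\<phi> w) = \<phi> (br (br x z) w)"
          unfolding s1 s2 s3 s4 s5 s6 by (simp add: algebra_simps)
      qed
    qed
  qed
  from simp_ideals[OF idealK] show ?thesis
  proof
    assume K0: "K = {0}"
    have "embeds_in_jordan_der sc br ?H"
      unfolding embeds_in_jordan_der_def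
    proof (intro exI[of _ ad_comm] conjI allI ballI impI)
      fix x
      show "ad_comm x \<in> jordan_der sc ?H"
        unfolding jordan_der_def
      proof (intro CollectI conjI ballI allI)
        fix \<phi> assume "\<phi> \<in> ?H" then show "ad_comm x \<phi> \<in> ?H" by (rule ad_comm_HomLie)
      next
        fix \<phi> \<psi> assume "\<phi> \<in> ?H" "\<psi> \<in> ?H"
        then show "ad_comm x (endo_add \<phi> \<psi>) = endo_add (ad_comm x \<phi>) (ad_comm x \<psi>)"
          by (simp add: ad_comm_def endo_add_def br_add_right algebra_simps)
      next
        fix a \<phi> assume "\<phi> \<in> ?H"
        then show "ad_comm x (endo_scale sc a \<phi>) = endo_scale sc a (ad_comm x \<phi>)"
          by (simp add: ad_comm_def endo_scale_def br_scale_right scale_right_diff_distrib)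
      next
        fix \<phi> \<psi> assume ph: "\<phi> \<in> ?H" and ps: "\<psi> \<in> ?H"
        show "ad_comm x (jordan_prod sc \<phi> \<psi>) =
          endo_add (jordan_prod sc (ad_comm x \<phi>) \<psi>) (jordan_prod sc \<phi> (ad_comm x \<psi>))"
        proof
          fix w
          have inner: "br x (\<phi> (\<psi> w) + \<psi> (\<phi> w)) - (\<phi> (\<psi> (br x w)) + \<psi> (\<phi> (br x w)))
            = (ad_comm x \<phi> (\<psi> w) + \<psi> (ad_comm x \<phi> w)) + (\<phi> (ad_comm x \<psi> w) + ad_comm x \<psi> (\<phi> w))"
            by (simp add: ad_comm_def lin_diff[OF linH[OF ph]] lin_diff[OF linH[OF ps]] br_add_right algebra_simps)
          show "ad_comm x (jordan_prod sc \<phi> \<psi>) w =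
            endo_add (jordan_prod sc (ad_comm x \<phi>) \<psi>) (jordan_prod sc \<phi> (ad_comm x \<psi>)) w"
            unfolding jordan_prod_def endo_add_def
            by (simp only: ad_comm_def br_scale_right scale_right_diff_distrib[symmetric]
                  scale_right_distrib[symmetric] inner)
        qed
      qed
    next
      fix x y \<phi> assume ph: "\<phi> \<in> ?H"
      show "ad_comm (x + y) \<phi> = endo_add (ad_comm x \<phi>) (ad_comm y \<phi>)"
        by (simp add: ad_comm_def endo_add_def br_add_left lin_add[OF linH[OF ph]] algebra_simps)
    next
      fix a x \<phi> assume ph: "\<phi> \<in> ?H"
      show "ad_comm (sc a x) \<phi> = endo_scale sc a (ad_comm x \<phi>)"
        by (simp add: ad_comm_def endo_scale_def br_scale_left lin_scale[OF linH[OF ph]] scale_right_diff_distrib)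
    next
      fix x y \<phi> assume ph: "\<phi> \<in> ?H"
      show "ad_comm (br x y) \<phi> = endo_diff (ad_comm x (ad_comm y \<phi>)) (ad_comm y (ad_comm x \<phi>))"
        by (simp add: ad_comm_def endo_diff_def br_br br_diff_right lin_diff[OF linH[OF ph]] algebra_simps)
    next
      fix x y assume eq: "\<forall>\<phi>\<in>?H. ad_comm x \<phi> = ad_comm y \<phi>"
      have "x - y \<in> K" unfolding K_def
      proof (intro CollectI ballI allI)
        fix \<phi> w assume ph: "\<phi> \<in> ?H"
        have "ad_comm x \<phi> w = ad_comm y \<phi> w" using eq ph by simp
        then show "br (x - y) (\<phi> w) = \<phi> (br (x - y) w)"
          by (simp add: ad_comm_def br_diff_left lin_diff[OF linH[OF ph]] algebra_simps)
      qed
      then show "x = y" using K0 by simp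
    qed
    then show ?thesis by simp
  next
    assume KU: "K = UNIV"
    have "?H \<subseteq> Cent sc br"
    proof
      fix \<phi> assume ph: "\<phi> \<in> ?H"
      have hc: "br u (\<phi> w) = \<phi> (br u w)" for u w using KU ph unfolding K_def by blast
      have "\<phi> (br x y) = br (\<phi> x) y" for x y
        using hc[of y x] br_skew[of x y] br_skew[of "\<phi> x" y] lin_neg[OF linH[OF ph]] by simp
      then show "\<phi> \<in> Cent sc br" using linH[OF ph] by (simp add: Cent_def)
    qed
    then show ?thesis using Cent_HomLie by blast
  qed
qed

end
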